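(* Let $(X,\mu)$ be a probability space. If $\mu$ is nontrivial (there exist measurable sets of measure strictly between $0$ and $1$), then for any $\mu$-preserving transformation $T$ of $X$ there exists a sequence $\{A_n\}$ of measurable subsets of $X$ with $\sum_n\mu(A_n)=\infty$ which is not Borel-Cantelli. Furthermore, if $\mu$ is non-atomic, then for any $\mu$-preserving transformation $T$ there exists a sequence $\{A_n\}$ of measurable subsets with $\sum_n\mu(A_n)=\infty$ such that for $\mu$-a.e. $x\in X$ there are at most finitely many $n$ with $T^nx\in A_n$.
   Context: A sequence of measurable sets $A_n$ with $\sum\mu(A_n)=\infty$ is Borel-Cantelli if for $\mu$-a.e. $x$ there are infinitely many $n$ with $T^nx\in A_n$. *)

theory Defs
  imports "HOL-Probability.Probability"
begin

definition measure_preserving_map :: "'a measure \<Rightarrow> ('a \<Rightarrow> 'a) \<Rightarrow> bool" where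
  "measure_preserving_map M T \<longleftrightarrow> T \<in> M \<rightarrow>\<^sub>M M \<and>
     (\<forall>A \<in> sets M. emeasure M (T -` A \<inter> space M) = emeasure M A)"

definition nontrivial_measure :: "'a measure \<Rightarrow> bool" where
  "nontrivial_measure M \<longleftrightarrow> (\<exists>A \<in> sets M. 0 < measure M A \<and> measure M A < 1)"

definition non_atomic :: "'a measure \<Rightarrow> bool" where
  "non_atomic M \<longleftrightarrow> (\<forall>A \<in> sets M. 0 < emeasure M A \<longrightarrow>
      (\<exists>B \<in> sets M. B \<subseteq> A \<and> 0 < emeasure M B \<and> emeasure M B < emeasure M A))"

definition borel_cantelli :: "'a measure \<Rightarrow> ('a \<Rightarrow> 'a) \<Rightarrow> (nat \<Rightarrow> 'a set) \<Rightarrow> bool" where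
  "borel_cantelli M T A \<longleftrightarrow> (AE x in M. \<exists>\<^sub>\<infinity> n. (T ^^ n) x \<in> A n)"

end

theory Submission imports Defs begin

lemma mp_meas: "measure_preserving_map M T \<Longrightarrow> (T ^^ n) \<in> M \<rightarrow>\<^sub>M M"
proof (induction n)
  case 0 show ?case unfolding funpow.simps(1) by (rule measurable_ident)
next
  case (Suc n)
  have "T \<in> M \<rightarrow>\<^sub>M M" using Suc.prems unfolding measure_preserving_map_def by (rule conjunct1)
  have eq: "T ^^ Suc n = (T ^^ n) \<circ> T" by (rule funpow_Suc_right)
  show ?case unfolding eq by (rule measurable_comp[OF \<open>T \<in> M \<rightarrow>\<^sub>M M\<close> Suc.IH[OF Suc.prems]])
qed

lemma mp_space: "measure_preserving_map M T \<Longrightarrow> x \<in> space M \<Longrightarrow> (T ^^ n) x \<in> space M"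
  by (rule measurable_space[OF mp_meas])

lemma mp_emeasure: assumes "measure_preserving_map M T" "A \<in> sets M"
  shows "emeasure M ((T ^^ n) -` A \<inter> space M) = emeasure M A"
proof (induction n)
  case 0
  have "(T ^^ 0) -` A \<inter> space M = A" using sets.sets_into_space[OF assms(2)] by auto
  then show ?case by (simp only:)
next
  case (Suc n)
  have TM: "T \<in> M \<rightarrow>\<^sub>M M" using assms(1) unfolding measure_preserving_map_def by (rule conjunct1)
  have S: "(T ^^ n) -` A \<inter> space M \<in> sets M" by (rule measurable_sets[OF mp_meas[OF assms(1)] assms(2)])
  have "(T ^^ Suc n) -` A \<inter> space M = T -` ((T ^^ n) -` A \<inter> space M) \<inter> space M"
    unfolding funpow_Suc_right using measurable_space[OF TM] by auto
  also have "emeasure M \<dots> = emeasure M ((T ^^ n) -` A \<inter> space M)"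
    using assms(1) unfolding measure_preserving_map_def using S by (auto dest: conjunct2 bspec)
  finally show ?case using Suc by (simp only:)
qed

lemma small_sets_AE:
  assumes P: "prob_space M" and T: "measure_preserving_map M T"
    and small: "\<forall>e>0. \<exists>C\<in>sets M. 0 < measure M C \<and> measure M C < e"
  shows "\<exists>A :: nat \<Rightarrow> 'a set. (\<forall>n. A n \<in> sets M) \<and> (\<Sum>n. emeasure M (A n)) = \<infinity> \<and>
           (AE x in M. finite {n. (T ^^ n) x \<in> A n})"
proof -
  interpret prob_space M by fact
  have "\<forall>k. \<exists>C. C \<in> sets M \<and> 0 < measure M C \<and> measure M C < (1/2::real)^k"
  proof
    fix k :: nat
    have "(0::real) < (1/2)^k" by simp
    then obtain C where "C \<in> sets M" "0 < measure M C" "measure M C < (1/2::real)^k"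
      using small by blast
    then show "\<exists>C. C \<in> sets M \<and> 0 < measure M C \<and> measure M C < (1/2::real)^k" by blast
  qed
  from choice[OF this] obtain C where C0: "\<forall>k. C k \<in> sets M \<and> 0 < measure M (C k) \<and> measure M (C k) < (1/2::real)^k"
    by blast
  have C: "\<And>k. C k \<in> sets M" "\<And>k. 0 < measure M (C k)" "\<And>k. measure M (C k) < (1/2::real)^k"
    using C0 by auto
  define L where "L k = nat \<lceil>1 / measure M (C k)\<rceil>" for k
  have L1: "1 \<le> real (L k) * measure M (C k)" for k
  proof -
    have "1 / measure M (C k) \<le> real (L k)" unfolding L_def by (rule real_nat_ceiling_ge)
    then show ?thesis using C(2)[of k] by (simp add: field_simps)
  qed
  have Lpos: "1 \<le> L k" for k
  proof (rule ccontr)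
    assume "\<not> 1 \<le> L k" then have "L k = 0" by simp
    with L1[of k] show False by simp
  qed
  define N where "N k = (\<Sum>i<k. L i)" for k
  have Nsuc: "N (Suc k) = N k + L k" for k by (simp add: N_def)
  have N0: "N 0 = 0" by (simp add: N_def)
  have Nmono: "strict_mono N"
  proof (rule strict_monoI_Suc)
    fix n show "N n < N (Suc n)" using Lpos[of n] Nsuc[of n] by simp
  qed
  have Nge: "k \<le> N k" for k using seq_suble[OF Nmono] by simp
  define kk where "kk n = (LEAST k. n < N (Suc k))" for n
  have kk: "N (kk n) \<le> n \<and> n < N (Suc (kk n))" for n
  proof
    have ex: "n < N (Suc n)" using Nge[of "Suc n"] by simp
    show "n < N (Suc (kk n))" unfolding kk_def by (rule LeastI[of "\<lambda>k. n < N (Suc k)", OF ex])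
    show "N (kk n) \<le> n"
    proof (cases "kk n")
      case 0 then show ?thesis using N0 by simp
    next
      case (Suc j)
      then have "j < kk n" by simp
      then have "\<not> n < N (Suc j)" unfolding kk_def by (rule not_less_Least)
      then show ?thesis using Suc by simp
    qed
  qed
  have kk_ge: "K \<le> kk n" if "N K \<le> n" for K n
  proof (rule ccontr)
    assume "\<not> K \<le> kk n"
    then have "Suc (kk n) \<le> K" by simp
    then have "N (Suc (kk n)) \<le> N K" using strict_mono_less_eq[OF Nmono] by simp
    then show False using kk[of n] that by simp
  qed
  have kk_eq: "kk n = K" if "N K \<le> n" "n < N (Suc K)" for K n
  proof -
    have "kk n \<le> K"
    proof (rule ccontr)
      assume "\<not> kk n \<le> K"
      then have "Suc K \<le> kk n" by simp
      then have "N (Suc K) \<le> N (kk n)" using strict_mono_less_eq[OF Nmono] by simp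
      then show False using kk[of n] that by simp
    qed
    then show ?thesis using kk_ge[OF that(1)] by simp
  qed
  define A where "A n = (T ^^ (N (Suc (kk n)) - n)) -` C (kk n) \<inter> space M" for n
  have Asets: "A n \<in> sets M" for n
    unfolding A_def by (rule measurable_sets[OF mp_meas[OF T] C(1)])
  have Ameas: "emeasure M (A n) = ennreal (measure M (C (kk n)))" for n
    unfolding A_def mp_emeasure[OF T C(1)] by (simp add: emeasure_eq_measure)
  have Aiff: "(T ^^ n) x \<in> A n \<longleftrightarrow> (T ^^ N (Suc (kk n))) x \<in> C (kk n)" if x: "x \<in> space M" for x n
  proof -
    have e: "N (Suc (kk n)) - n + n = N (Suc (kk n))" using kk[of n] by simp
    have "(T ^^ (N (Suc (kk n)) - n)) ((T ^^ n) x) = (T ^^ (N (Suc (kk n)) - n + n)) x"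
      by (simp add: funpow_add)
    then show ?thesis unfolding A_def using e mp_space[OF T x] by simp
  qed
  define G where "G k = (T ^^ N (Suc k)) -` C k \<inter> space M" for k
  have Gsets: "G k \<in> sets M" for k
    unfolding G_def by (rule measurable_sets[OF mp_meas[OF T] C(1)])
  have Gmeas: "measure M (G k) = measure M (C k)" for k
    unfolding G_def measure_def mp_emeasure[OF T C(1)] by simp
  have summ: "summable (\<lambda>k. measure M (G k))"
  proof (rule summable_comparison_test[of _ "\<lambda>k. (1/2::real)^k"])
    show "\<exists>N. \<forall>n\<ge>N. norm (measure M (G n)) \<le> (1/2) ^ n"
      using C(3) Gmeas by (auto intro: less_imp_le)
    show "summable (\<lambda>k. (1/2::real)^k)" by (rule summable_geometric) simp
  qed
  have AEG: "AE x in M. eventually (\<lambda>k. x \<in> space M - G k) sequentially"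
    by (rule borel_cantelli_AE1[OF Gsets _ summ]) (simp add: less_top[symmetric])
  have fin: "AE x in M. finite {n. (T ^^ n) x \<in> A n}"
  proof (rule AE_mp[OF AEG AE_I2], rule impI)
    fix x assume x: "x \<in> space M" and ev: "eventually (\<lambda>k. x \<in> space M - G k) sequentially"
    then obtain K where K: "\<And>k. K \<le> k \<Longrightarrow> x \<notin> G k" by (auto simp: eventually_sequentially)
    have "{n. (T ^^ n) x \<in> A n} \<subseteq> {..<N K}"
    proof
      fix n assume n: "n \<in> {n. (T ^^ n) x \<in> A n}"
      show "n \<in> {..<N K}"
      proof (rule ccontr)
        assume "n \<notin> {..<N K}"
        then have "K \<le> kk n" using kk_ge by simp
        then have "x \<notin> G (kk n)" by (rule K)
        moreover have "x \<in> G (kk n)" using n Aiff[OF x] x by (simp add: G_def)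
        ultimately show False by simp
      qed
    qed
    then show "finite {n. (T ^^ n) x \<in> A n}" by (rule finite_subset) simp
  qed
  define f where "f n = measure M (C (kk n))" for n
  have fnn: "0 \<le> f n" for n by (simp add: f_def)
  have psum: "real K \<le> (\<Sum>n<N K. f n)" for K
  proof (induction K)
    case 0 then show ?case using N0 by simp
  next
    case (Suc K)
    have "(\<Sum>n\<in>{N K..<N (Suc K)}. f n) = (\<Sum>n\<in>{N K..<N (Suc K)}. measure M (C K))"
      by (rule sum.cong) (auto simp: f_def kk_eq)
    also have "\<dots> = real (L K) * measure M (C K)" using Nsuc by simp
    finally have b: "1 \<le> (\<Sum>n\<in>{N K..<N (Suc K)}. f n)" using L1 by simp
    have "(\<Sum>n<N (Suc K). f n) = (\<Sum>n<N K. f n) + (\<Sum>n\<in>{N K..<N (Suc K)}. f n)"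
      unfolding lessThan_atLeast0 using Nsuc
      by (intro sum.atLeastLessThan_concat[symmetric]) auto
    then show ?case using Suc b by simp
  qed
  have ns: "\<not> summable f"
  proof
    assume s: "summable f"
    obtain K :: nat where "suminf f < real K" using reals_Archimedean2 by blast
    moreover have "(\<Sum>n<N K. f n) \<le> suminf f" by (rule sum_le_suminf[OF s]) (auto simp: fnn)
    ultimately show False using psum[of K] by simp
  qed
  have "(\<Sum>n. emeasure M (A n)) = \<infinity>"
    unfolding Ameas using summable_iff_suminf_neq_top[OF fnn ns] by (simp add: f_def)
  then show ?thesis using Asets fin by blast
qed


definition selB :: "'a measure \<Rightarrow> ('a \<Rightarrow> 'a) \<Rightarrow> 'a set \<Rightarrow> nat \<Rightarrow> 'a set \<Rightarrow> 'a set" where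
  "selB M T B n E = (if 0 < measure M (E - (T ^^ n) -` B) then B else space M - B)"

primrec Eseq :: "'a measure \<Rightarrow> ('a \<Rightarrow> 'a) \<Rightarrow> 'a set \<Rightarrow> nat \<Rightarrow> 'a set" where
  "Eseq M T B 0 = space M"
| "Eseq M T B (Suc n) = Eseq M T B n - (T ^^ n) -` selB M T B n (Eseq M T B n)"

lemma atomic_not_BC:
  assumes P: "prob_space M" and T: "measure_preserving_map M T"
    and B: "B \<in> sets M" "0 < measure M B" "measure M B < 1"
    and d: "0 < d" "\<And>C. C \<in> sets M \<Longrightarrow> measure M C = 0 \<or> d \<le> measure M C"
  shows "\<exists>A :: nat \<Rightarrow> 'a set. (\<forall>n. A n \<in> sets M) \<and> (\<Sum>n. emeasure M (A n)) = \<infinity> \<and>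
           \<not> borel_cantelli M T A"
proof -
  interpret prob_space M by fact
  define E where "E = Eseq M T B"
  define A where "A n = selB M T B n (E n)" for n
  have Esuc: "E (Suc n) = E n - (T ^^ n) -` A n" for n by (simp add: E_def A_def)
  have Asets: "A n \<in> sets M" for n using B(1) by (simp add: A_def selB_def)
  have Einv: "E n \<in> sets M \<and> E n \<subseteq> space M \<and> 0 < measure M (E n)" for n
  proof (induction n)
    case 0 then show ?case using prob_space by (simp add: E_def)
  next
    case (Suc n)
    then have En: "E n \<in> sets M" "E n \<subseteq> space M" "0 < measure M (E n)" by auto
    define Q where "Q = (T ^^ n) -` B \<inter> space M"
    have Q: "Q \<in> sets M" unfolding Q_def by (rule measurable_sets[OF mp_meas[OF T] B(1)])
    have d1: "E n - (T ^^ n) -` B = E n - Q" using En(2) by (auto simp: Q_def)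
    show ?case
    proof (cases "0 < measure M (E n - Q)")
      case True
      then have "A n = B" by (simp add: A_def selB_def d1)
      then have "E (Suc n) = E n - Q" using Esuc d1 by simp
      then show ?thesis using True En Q by auto
    next
      case False
      then have "A n = space M - B" by (simp add: A_def selB_def d1)
      then have "E (Suc n) = E n \<inter> Q"
        using Esuc En(2) mp_space[OF T] by (auto simp: Q_def)
      moreover have "measure M (E n - Q) = 0" using False measure_nonneg[of M "E n - Q"] by linarith
      moreover have "measure M (E n - Q) = measure M (E n) - measure M (E n \<inter> Q)"
        by (rule finite_measure_Diff'[OF En(1) Q])
      ultimately show ?thesis using En Q by auto
    qed
  qed
  have dec: "decseq E" by (rule decseq_SucI) (auto simp: Esuc)
  have Ed: "d \<le> measure M (E n)" for n using d(2)[of "E n"] Einv[of n] by auto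
  have lim: "(\<lambda>n. measure M (E n)) \<longlonglongrightarrow> measure M (\<Inter>i. E i)"
    by (rule finite_Lim_measure_decseq) (use Einv dec in auto)
  have Id: "d \<le> measure M (\<Inter>i. E i)"
    by (rule LIMSEQ_le_const[OF lim]) (use Ed in auto)
  have Isets: "(\<Inter>i. E i) \<in> sets M" using Einv by auto
  have Isub: "(\<Inter>i. E i) \<subseteq> space M" using Einv[of 0] by auto
  have avoid: "(T ^^ n) x \<notin> A n" if "x \<in> (\<Inter>i. E i)" for x n
  proof -
    have "x \<in> E (Suc n)" using that by auto
    then show ?thesis by (simp add: Esuc)
  qed
  have notBC: "\<not> borel_cantelli M T A"
  proof
    assume "borel_cantelli M T A"
    then have ae: "AE x in M. \<exists>\<^sub>\<infinity> n. (T ^^ n) x \<in> A n" by (simp add: borel_cantelli_def)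
    have "AE x in M. x \<notin> (\<Inter>i. E i)"
    proof (rule AE_mp[OF ae AE_I2], rule impI)
      fix x assume "x \<in> space M" "\<exists>\<^sub>\<infinity> n. (T ^^ n) x \<in> A n"
      then have "infinite {n. (T ^^ n) x \<in> A n}" by (simp add: INFM_iff_infinite)
      then show "x \<notin> (\<Inter>i. E i)" using avoid by fastforce
    qed
    then have "emeasure M {x \<in> space M. \<not> x \<notin> (\<Inter>i. E i)} = 0" by (rule AE_E2)
    moreover have "{x \<in> space M. \<not> x \<notin> (\<Inter>i. E i)} = (\<Inter>i. E i)" using Isub by auto
    ultimately have "measure M (\<Inter>i. E i) = 0" by (simp add: measure_def)
    then show False using Id d(1) by simp
  qed
  define c where "c = min (measure M B) (1 - measure M B)"
  have cpos: "0 < c" using B by (simp add: c_def)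
  have Ac: "c \<le> measure M (A n)" for n
  proof -
    have "measure M (space M - B) = 1 - measure M B"
      using finite_measure_compl[OF B(1)] prob_space by simp
    then show ?thesis by (simp add: A_def selB_def c_def)
  qed
  have ns: "\<not> summable (\<lambda>n. measure M (A n))"
  proof
    assume "summable (\<lambda>n. measure M (A n))"
    then have "(\<lambda>n. measure M (A n)) \<longlonglongrightarrow> 0" by (rule summable_LIMSEQ_zero)
    then have "eventually (\<lambda>n. measure M (A n) < c) sequentially" using cpos by (rule order_tendstoD(2))
    then obtain n where "measure M (A n) < c" by (auto simp: eventually_sequentially)
    then show False using Ac[of n] by simp
  qed
  have "(\<Sum>n. emeasure M (A n)) = \<infinity>"
    using summable_iff_suminf_neq_top[OF measure_nonneg ns] by (simp add: emeasure_eq_measure)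
  then show ?thesis using Asets notBC by (intro exI[of _ A]) simp
qed

lemma nonatomic_small:
  assumes P: "prob_space M" and na: "non_atomic M"
  shows "\<forall>e>0. \<exists>C\<in>sets M. 0 < measure M C \<and> measure M C < e"
proof (rule ccontr)
  interpret prob_space M by fact
  assume "\<not> (\<forall>e>0. \<exists>C\<in>sets M. 0 < measure M C \<and> measure M C < e)"
  then obtain e :: real where e0: "0 < e" and e1: "\<forall>C\<in>sets M. \<not> (0 < measure M C \<and> measure M C < e)"
    by auto
  have e2: "e \<le> measure M C" if "C \<in> sets M" "0 < measure M C" for C
    using e1 that by (auto simp: not_less)
  note e = e0 e2
  define S where "S = {measure M C |C. C \<in> sets M \<and> 0 < measure M C}"
  have Sne: "S \<noteq> {}" using prob_space unfolding S_def by (intro exI[of _ 1] notI) auto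
  have Sbdd: "bdd_below S" unfolding S_def bdd_below_def using e(2) by auto
  define eta where "eta = Inf S"
  have eta_le: "eta \<le> measure M C" if "C \<in> sets M" "0 < measure M C" for C
    unfolding eta_def by (rule cInf_lower[OF _ Sbdd]) (use that in \<open>auto simp: S_def\<close>)
  have eta_ge: "e \<le> eta" unfolding eta_def by (rule cInf_greatest[OF Sne]) (auto simp: S_def e(2))
  have "eta < 2 * eta" using eta_ge e(1) by simp
  then obtain m where "m \<in> S" "m < 2 * eta" using cInf_lessD[OF Sne] unfolding eta_def by metis
  then obtain C where C: "C \<in> sets M" "0 < measure M C" "measure M C < 2 * eta" by (auto simp: S_def)
  have "0 < emeasure M C" using C by (simp add: emeasure_eq_measure)
  then obtain D where D: "D \<in> sets M" "D \<subseteq> C" "0 < emeasure M D" "emeasure M D < emeasure M C"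
    using na C(1) unfolding non_atomic_def by force
  have D': "0 < measure M D" "measure M D < measure M C"
    using D(3,4) by (simp_all add: emeasure_eq_measure ennreal_less_iff)
  have "measure M (C - D) = measure M C - measure M D" by (rule finite_measure_Diff[OF C(1) D(1,2)])
  then have "0 < measure M (C - D)" using D' by simp
  then have "eta \<le> measure M (C - D)" using eta_le C(1) D(1) by auto
  moreover have "eta \<le> measure M D" using eta_le D(1) D'(1) by auto
  ultimately show False using C(3) \<open>measure M (C - D) = measure M C - measure M D\<close> by simp
qed

theorem proposition1p6:
  fixes M :: "'a measure"
  assumes "prob_space M"
  shows "(nontrivial_measure M \<longrightarrow>
           (\<forall>T. measure_preserving_map M T \<longrightarrow>
              (\<exists>A :: nat \<Rightarrow> 'a set. (\<forall>n. A n \<in> sets M) \<and>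
                 (\<Sum>n. emeasure M (A n)) = \<infinity> \<and> \<not> borel_cantelli M T A)))
       \<and> (non_atomic M \<longrightarrow>
           (\<forall>T. measure_preserving_map M T \<longrightarrow>
              (\<exists>A :: nat \<Rightarrow> 'a set. (\<forall>n. A n \<in> sets M) \<and>
                 (\<Sum>n. emeasure M (A n)) = \<infinity> \<and>
                 (AE x in M. finite {n. (T ^^ n) x \<in> A n}))))"
  proof -
  interpret prob_space M by fact
  have notBC_of_fin: "\<not> borel_cantelli M T A"
    if fin: "AE x in M. finite {n. (T ^^ n) x \<in> A n}" for T :: "'a \<Rightarrow> 'a" and A
  proof
    assume "borel_cantelli M T A"
    then have ae: "AE x in M. infinite {n. (T ^^ n) x \<in> A n}"
      by (simp add: borel_cantelli_def INFM_iff_infinite)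
    have "AE x in M. False" using fin ae by eventually_elim simp
    then have "emeasure M {x \<in> space M. \<not> False} = 0" by (rule AE_E2)
    then show False using emeasure_space_1 by simp
  qed
  show ?thesis
  proof (intro conjI impI allI)
    fix T assume nt: "nontrivial_measure M" and T: "measure_preserving_map M T"
    obtain B where B: "B \<in> sets M" "0 < measure M B" "measure M B < 1"
      using nt unfolding nontrivial_measure_def by auto
    show "\<exists>A :: nat \<Rightarrow> 'a set. (\<forall>n. A n \<in> sets M) \<and>
                 (\<Sum>n. emeasure M (A n)) = \<infinity> \<and> \<not> borel_cantelli M T A"
    proof (cases "\<forall>e>0. \<exists>C\<in>sets M. 0 < measure M C \<and> measure M C < e")
      case True
      from small_sets_AE[OF assms T True] obtain A :: "nat \<Rightarrow> 'a set" where
        A: "\<forall>n. A n \<in> sets M" "(\<Sum>n. emeasure M (A n)) = \<infinity>" "AE x in M. finite {n. (T ^^ n) x \<in> A n}"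
        by (elim exE conjE)
      show ?thesis using A(1,2) notBC_of_fin[OF A(3)] by (intro exI[of _ A]) simp
    next
      case False
      then obtain e :: real where e0: "0 < e" and e1: "\<forall>C\<in>sets M. \<not> (0 < measure M C \<and> measure M C < e)"
        by auto
      have e2: "measure M C = 0 \<or> e \<le> measure M C" if "C \<in> sets M" for C
      proof -
        have "measure M C \<le> 0 \<or> e \<le> measure M C" using e1 that by (auto simp: not_less)
        moreover have "0 \<le> measure M C" by (rule measure_nonneg)
        ultimately show ?thesis by (cases "e \<le> measure M C") linarith+
      qed
      show ?thesis by (rule atomic_not_BC[OF assms T B e0 e2])
    qed
  next
    fix T assume na: "non_atomic M" and T: "measure_preserving_map M T"
    show "\<exists>A :: nat \<Rightarrow> 'a set. (\<forall>n. A n \<in> sets M) \<and>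
                 (\<Sum>n. emeasure M (A n)) = \<infinity> \<and>
                 (AE x in M. finite {n. (T ^^ n) x \<in> A n})"
      by (rule small_sets_AE[OF assms T nonatomic_small[OF assms na]])
  qed
qed

end
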